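(* Let $\psi$ be a saturation with saturation level $\alpha>0$ and $\mathbf{u}:[0,L]\to\mathbb{R}^P$ a given velocity, and consider the explicit finite-volume scheme for the system $\partial_t\boldsymbol{\rho}+\partial_x(\mathrm{diag}(\boldsymbol{\rho})\psi(\sigma)\mathbf{u})=0$ on $(0,L)$ described in the context. Fix $n$ and suppose $\boldsymbol{\rho}_i^n\ge0$ entry-wise and $\sigma_i^n\le\alpha$ for all $i$. Then $\boldsymbol{\rho}_i^{n+1}\ge0$ entry-wise and $\sigma_i^{n+1}\le\alpha$ for all $i$, provided $$\Delta t\le\frac{\Gamma}{4\|\mathbf{u}\|}\Delta x,\qquad \Gamma=\min\Big\{\frac{2}{\psi(0)},\gamma\Big\},\quad \gamma=\inf_{s\in(0,\alpha)}\frac{\alpha-s}{\alpha\psi(s)},\quad \|\mathbf{u}\|=\max_{i,p}|(\mathbf{u}_{i+1/2})_p|.$$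
   Context: A saturation is a continuous function $\psi:[0,\infty)\to\mathbb{R}$ that is non-increasing and for which there is $\alpha>0$ (the saturation level) with $\psi(\alpha)=0$ and $(\alpha-s)\psi(s)>0$ for $s\neq\alpha$. Discretisation: $\Delta x=L/M$, cells with centres $x_i=\Delta x(i-1/2)$ and interfaces $x_{i+1/2}$, $i=1,\dots,M$; $\boldsymbol{\rho}_i^n\in\mathbb{R}^P$ is the vector of $P$ species densities on cell $i$ at time $t^n=n\Delta t$, and $\sigma_i^n=\sum_{p=1}^P(\boldsymbol{\rho}_i^n)_p$. The scheme is $$\frac{\boldsymbol{\rho}_i^{n+1}-\boldsymbol{\rho}_i^n}{\Delta t}+\frac{\mathbf{F}_{i+1/2}^n-\mathbf{F}_{i-1/2}^n}{\Delta x}=0,\qquad \mathbf{F}_{i+1/2}^n=\mathrm{diag}(\boldsymbol{\rho}_i^E)\psi_{i+1}^W\mathbf{u}_{i+1/2}^++\mathrm{diag}(\boldsymbol{\rho}_{i+1}^W)\psi_i^E\mathbf{u}_{i+1/2}^-,$$ with $\mathbf{F}_{1/2}^n=\mathbf{F}_{M+1/2}^n=0$, $\mathbf{u}_{i+1/2}=\mathbf{u}(x_{i+1/2})$, where $(\cdot)^+=\max\{\cdot,0\}$, $(\cdot)^-=\min\{\cdot,0\}$ entry-wise; $\boldsymbol{\rho}_i^{E}=\boldsymbol{\rho}_i^n+\frac{\Delta x}{2}(\boldsymbol{\rho}_x)_i^n$, $\boldsymbol{\rho}_i^{W}=\boldsymbol{\rho}_i^n-\frac{\Delta x}{2}(\boldsymbol{\rho}_x)_i^n$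 with $(\boldsymbol{\rho}_x)_i^n=\mathrm{minmod}\big(\theta\frac{\boldsymbol{\rho}_{i+1}^n-\boldsymbol{\rho}_i^n}{\Delta x},\frac{\boldsymbol{\rho}_{i+1}^n-\boldsymbol{\rho}_{i-1}^n}{2\Delta x},\theta\frac{\boldsymbol{\rho}_i^n-\boldsymbol{\rho}_{i-1}^n}{\Delta x}\big)$ applied entry-wise; $\psi_i^E=\psi(\sigma_i^E)$, $\psi_i^W=\psi(\sigma_i^W)$ with $\sigma_i^{E}=\sigma_i^n+\frac{\Delta x}{2}(\sigma_x)_i^n$, $\sigma_i^{W}=\sigma_i^n-\frac{\Delta x}{2}(\sigma_x)_i^n$, $(\sigma_x)_i^n=\mathrm{minmod}\big(\theta\frac{\sigma_{i+1}^n-\sigma_i^n}{\Delta x},\frac{\sigma_{i+1}^n-\sigma_{i-1}^n}{2\Delta x},\theta\frac{\sigma_i^n-\sigma_{i-1}^n}{\Delta x}\big)$; $\theta=2$. Here $\mathrm{minmod}(a,b,c)=\min(a,b,c)$ if $a,b,c>0$, $\max(a,b,c)$ if $a,b,c<0$, and $0$ otherwise. The hypotheses on $\boldsymbol{\rho}_i^n$ apply to all values entering the slope computations. *)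

theory Defs
  imports Complex_Main
begin

definition saturation :: "(real \<Rightarrow> real) \<Rightarrow> real \<Rightarrow> bool" where
  "saturation psi alpha \<longleftrightarrow>
     continuous_on {0..} psi \<and>
     (\<forall>s t. 0 \<le> s \<longrightarrow> s \<le> t \<longrightarrow> psi t \<le> psi s) \<and>
     alpha > 0 \<and> psi alpha = 0 \<and>
     (\<forall>s. 0 \<le> s \<longrightarrow> s \<noteq> alpha \<longrightarrow> (alpha - s) * psi s > 0)"

definition minmod3 :: "real \<Rightarrow> real \<Rightarrow> real \<Rightarrow> real" where
  "minmod3 a b c =
     (if a > 0 \<and> b > 0 \<and> c > 0 then min a (min b c)
      else if a < 0 \<and> b < 0 \<and> c < 0 then max a (max b c) else 0)"

text \<open>Limited slope of a cell-indexed scalar quantity v at cell i (i \<ge> 1), theta = 2.\<close>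
definition slope :: "real \<Rightarrow> (nat \<Rightarrow> real) \<Rightarrow> nat \<Rightarrow> real" where
  "slope dx v i = minmod3 (2 * (v (i+1) - v i) / dx) ((v (i+1) - v (i-1)) / (2 * dx))
                          (2 * (v i - v (i-1)) / dx)"

definition recE :: "real \<Rightarrow> (nat \<Rightarrow> real) \<Rightarrow> nat \<Rightarrow> real" where
  "recE dx v i = v i + dx / 2 * slope dx v i"

definition recW :: "real \<Rightarrow> (nat \<Rightarrow> real) \<Rightarrow> nat \<Rightarrow> real" where
  "recW dx v i = v i - dx / 2 * slope dx v i"

text \<open>Species densities: rho i p, cell i (cells 1..M, ghost cells 0 and M+1), species p < P.\<close>
definition total :: "nat \<Rightarrow> (nat \<Rightarrow> nat \<Rightarrow> real) \<Rightarrow> nat \<Rightarrow> real" where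
  "total P rho i = (\<Sum>p<P. rho i p)"

text \<open>Numerical flux at interface x_{j+1/2} = dx * j, species p; zero at j = 0 and j = M.\<close>
definition flux :: "(real \<Rightarrow> real) \<Rightarrow> (real \<Rightarrow> nat \<Rightarrow> real) \<Rightarrow> nat \<Rightarrow> nat \<Rightarrow> real
                    \<Rightarrow> (nat \<Rightarrow> nat \<Rightarrow> real) \<Rightarrow> nat \<Rightarrow> nat \<Rightarrow> real" where
  "flux psi u P M dx rho j p =
     (if 1 \<le> j \<and> j < M then
        recE dx (\<lambda>i. rho i p) j * psi (recW dx (total P rho) (j+1)) * max (u (dx * real j) p) 0
      + recW dx (\<lambda>i. rho i p) (j+1) * psi (recE dx (total P rho) j) * min (u (dx * real j) p) 0
      else 0)"

definition step :: "(real \<Rightarrow> real) \<Rightarrow> (real \<Rightarrow> nat \<Rightarrow> real) \<Rightarrow> nat \<Rightarrow> nat \<Rightarrow> real \<Rightarrow> real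
                    \<Rightarrow> (nat \<Rightarrow> nat \<Rightarrow> real) \<Rightarrow> nat \<Rightarrow> nat \<Rightarrow> real" where
  "step psi u P M dx dt rho i p =
     rho i p - dt / dx * (flux psi u P M dx rho i p - flux psi u P M dx rho (i-1) p)"

definition unorm :: "(real \<Rightarrow> nat \<Rightarrow> real) \<Rightarrow> nat \<Rightarrow> nat \<Rightarrow> real \<Rightarrow> real" where
  "unorm u P M dx = Max ({\<bar>u (dx * real i) p\<bar> | i p. i \<in> {1..M} \<and> p < P} \<union> {0})"

definition gammaS :: "(real \<Rightarrow> real) \<Rightarrow> real \<Rightarrow> real" where
  "gammaS psi alpha = Inf ((\<lambda>s. (alpha - s) / (alpha * psi s)) ` {0<..<alpha})"

definition GammaS :: "(real \<Rightarrow> real) \<Rightarrow> real \<Rightarrow> real" where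
  "GammaS psi alpha = min (2 / psi 0) (gammaS psi alpha)"

end

theory Submission
  imports Defs
begin

lemma slope_h:
  assumes dx: "dx > 0"
  shows "dx/2 * slope dx v i = 0 \<or> (0 \<le> dx/2 * slope dx v i \<and> dx/2 * slope dx v i \<le> v(i+1) - v i \<and> dx/2 * slope dx v i \<le> v i - v(i-1))
       \<or> (dx/2 * slope dx v i \<le> 0 \<and> v(i+1) - v i \<le> dx/2 * slope dx v i \<and> v i - v(i-1) \<le> dx/2 * slope dx v i)"
proof -
  define a where "a = 2 * (v (i+1) - v i) / dx"
  define b where "b = (v (i+1) - v (i-1)) / (2 * dx)"
  define c where "c = 2 * (v i - v (i-1)) / dx"
  have ea: "dx/2 * a = v(i+1) - v i" using dx by (simp add: a_def)
  have ec: "dx/2 * c = v i - v(i-1)" using dx by (simp add: c_def)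
  have s: "slope dx v i = minmod3 a b c" by (simp add: slope_def a_def b_def c_def)
  have mono: "dx/2 * x \<le> dx/2 * y" if "x \<le> y" for x y using dx that by simp
  show ?thesis
  proof (cases "a > 0 \<and> b > 0 \<and> c > 0")
    case True
    then have m: "minmod3 a b c = min a (min b c)" by (simp add: minmod3_def)
    have "min a (min b c) \<le> a" "min a (min b c) \<le> c" "0 \<le> min a (min b c)" using True by auto
    then show ?thesis unfolding s m using mono[of _ a] mono[of _ c] mono[of 0] ea ec by auto
  next
    case F: False
    show ?thesis
    proof (cases "a < 0 \<and> b < 0 \<and> c < 0")
      case True
      then have m: "minmod3 a b c = max a (max b c)" using F by (simp add: minmod3_def)
      have "a \<le> max a (max b c)" "c \<le> max a (max b c)" "max a (max b c) \<le> 0" using True by auto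
      then show ?thesis unfolding s m using mono[of a] mono[of c] mono[of _ 0] ea ec by auto
    next
      case False
      then have "minmod3 a b c = 0" using F unfolding minmod3_def by argo
      then show ?thesis unfolding s by simp
    qed
  qed
qed

lemma rec_between:
  assumes dx: "dx > 0"
  shows "min (v i) (v (i+1)) \<le> recE dx v i" "recE dx v i \<le> max (v i) (v (i+1))"
    "min (v (i-1)) (v i) \<le> recW dx v i" "recW dx v i \<le> max (v (i-1)) (v i)"
    "recE dx v i + recW dx v i = 2 * v i"
  using slope_h[OF dx, of v i] unfolding recE_def recW_def by auto

lemma gamma_props:
  assumes sat: "saturation psi alpha"
  shows "0 \<le> gammaS psi alpha"
    "\<And>s. 0 \<le> s \<Longrightarrow> s \<le> alpha \<Longrightarrow> gammaS psi alpha * psi s * alpha \<le> alpha - s"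
proof -
  have cont: "continuous_on {0..} psi" and al: "alpha > 0" and pa: "psi alpha = 0"
    and pos: "\<And>s. 0 \<le> s \<Longrightarrow> s \<noteq> alpha \<Longrightarrow> (alpha - s) * psi s > 0"
    using sat unfolding saturation_def by auto
  let ?S = "(\<lambda>s. (alpha - s) / (alpha * psi s)) ` {0<..<alpha}"
  have psipos: "psi s > 0" if "0 \<le> s" "s < alpha" for s
    using pos[of s] that by (simp add: zero_less_mult_iff)
  have elpos: "x > 0" if "x \<in> ?S" for x
    using that psipos al by auto
  have ne: "?S \<noteq> {}" using al by auto
  have bdd: "bdd_below ?S" using elpos by (meson bdd_below.I less_imp_le)
  show g0: "0 \<le> gammaS psi alpha" unfolding gammaS_def
    by (rule cInf_greatest[OF ne]) (use elpos in force)
  have inner: "gammaS psi alpha * psi s * alpha \<le> alpha - s" if "0 < s" "s < alpha" for s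
  proof -
    have "gammaS psi alpha \<le> (alpha - s) / (alpha * psi s)" unfolding gammaS_def
      by (rule cInf_lower[OF _ bdd]) (use that in auto)
    moreover have "alpha * psi s > 0" using psipos[of s] that al by simp
    ultimately show ?thesis by (simp add: field_simps mult.commute mult.left_commute)
  qed
  fix s assume s0: "0 \<le> s" and sa: "s \<le> alpha"
  show "gammaS psi alpha * psi s * alpha \<le> alpha - s"
  proof (cases "s = 0")
    case False
    show ?thesis
    proof (cases "s = alpha")
      case True then show ?thesis using pa by simp
    next
      case False
      then show ?thesis using inner s0 sa \<open>s \<noteq> 0\<close> by auto
    qed
  next
    case True
    have "(psi \<longlongrightarrow> psi 0) (at 0 within {0..})"
      using cont by (simp add: continuous_on_def)
    then have "(psi \<longlongrightarrow> psi 0) (at_right 0)"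
      by (rule tendsto_within_subset) auto
    then have lim: "((\<lambda>s. gammaS psi alpha * psi s * alpha - (alpha - s)) \<longlongrightarrow> gammaS psi alpha * psi 0 * alpha - (alpha - 0)) (at_right 0)"
      by (intro tendsto_intros)
    have ev: "eventually (\<lambda>s. gammaS psi alpha * psi s * alpha - (alpha - s) \<le> 0) (at_right (0::real))"
      unfolding eventually_at_right_field using al inner by (intro exI[of _ alpha]) auto
    have "gammaS psi alpha * psi 0 * alpha - (alpha - 0) \<le> 0"
      by (rule tendsto_upperbound[OF lim ev]) simp
    then show ?thesis using True by simp
  qed
qed


lemma prod_bounds:
  fixes a b x y X Y w U :: real
  assumes "0 \<le> a" "0 \<le> b" "0 \<le> x" "0 \<le> y" "x \<le> X" "y \<le> Y" "\<bar>w\<bar> \<le> U"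
  shows "a*x*max w 0 + b*y*min w 0 \<le> U*X*a" "-(a*x*max w 0 + b*y*min w 0) \<le> U*Y*b"
proof -
  have m1: "0 \<le> max w 0" "max w 0 \<le> U" using assms by auto
  have m2: "min w 0 \<le> 0" "-min w 0 \<le> U" using assms by auto
  have "a*x*max w 0 \<le> a*X*U" using assms m1 by (intro mult_mono) (auto intro: mult_mono)
  moreover have "b*y*min w 0 \<le> 0" using assms m2 by (simp add: mult_nonneg_nonpos)
  moreover have "b*y*(-min w 0) \<le> b*Y*U" using assms m2 by (intro mult_mono) (auto intro: mult_mono)
  moreover have "a*x*max w 0 \<ge> 0" using assms m1 by simp
  ultimately show "a*x*max w 0 + b*y*min w 0 \<le> U*X*a" "-(a*x*max w 0 + b*y*min w 0) \<le> U*Y*b"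
    by (auto simp: algebra_simps)
qed

theorem proposition3p3:
  fixes psi :: "real \<Rightarrow> real" and alpha L dx dt :: real and M P :: nat
    and u :: "real \<Rightarrow> nat \<Rightarrow> real" and rho :: "nat \<Rightarrow> nat \<Rightarrow> real"
  assumes sat: "saturation psi alpha"
    and L: "L > 0" and M: "M \<ge> 1" and dx: "dx = L / real M" and dt: "dt > 0"
    and nonneg: "\<forall>i\<le>M+1. \<forall>p<P. rho i p \<ge> 0"
    and bound: "\<forall>i\<le>M+1. total P rho i \<le> alpha"
    and cfl: "dt * (4 * unorm u P M dx) \<le> GammaS psi alpha * dx"
  shows "\<forall>i\<in>{1..M}. (\<forall>p<P. step psi u P M dx dt rho i p \<ge> 0)
                     \<and> total P (step psi u P M dx dt rho) i \<le> alpha"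
proof -
  have dxp: "dx > 0" using L M dx by simp
  have al: "alpha > 0" and pa: "psi alpha = 0"
    and monopsi: "\<And>s t. 0 \<le> s \<Longrightarrow> s \<le> t \<Longrightarrow> psi t \<le> psi s"
    and pos: "\<And>s. 0 \<le> s \<Longrightarrow> s \<noteq> alpha \<Longrightarrow> (alpha - s) * psi s > 0"
    using sat unfolding saturation_def by auto
  have psi0: "psi 0 > 0" using pos[of 0] al by (simp add: zero_less_mult_iff)
  have psir: "0 \<le> psi s \<and> psi s \<le> psi 0" if "0 \<le> s" "s \<le> alpha" for s
    using monopsi[of s alpha] monopsi[of 0 s] that pa by auto
  define U where "U = unorm u P M dx"
  define S where "S = {\<bar>u (dx * real i) p\<bar> | i p. i \<in> {1..M} \<and> p < P} \<union> {0}"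
  have finS: "finite S"
  proof -
    have "{\<bar>u (dx * real i) p\<bar> | i p. i \<in> {1..M} \<and> p < P} = (\<lambda>(i,p). \<bar>u (dx * real i) p\<bar>) ` ({1..M} \<times> {..<P})"
      by force
    then show ?thesis unfolding S_def by simp
  qed
  have U0: "U \<ge> 0" unfolding U_def unorm_def S_def[symmetric] using finS
    by (intro Max_ge) (auto simp: S_def)
  have Ub: "\<bar>u (dx * real j) p\<bar> \<le> U" if "1 \<le> j" "j \<le> M" "p < P" for j p
    unfolding U_def unorm_def S_def[symmetric] using finS
    by (intro Max_ge) (use that in \<open>auto simp: S_def\<close>)
  define lam where "lam = dt / dx"
  have lam0: "lam > 0" using dt dxp by (simp add: lam_def)
  define \<gamma> where "\<gamma> = gammaS psi alpha"
  have g0: "\<gamma> \<ge> 0" and gb: "\<And>s. 0 \<le> s \<Longrightarrow> s \<le> alpha \<Longrightarrow> \<gamma> * psi s * alpha \<le> alpha - s"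
    using gamma_props[OF sat] unfolding \<gamma>_def by auto
  have c1: "4 * lam * U \<le> GammaS psi alpha" using cfl dxp unfolding U_def by (simp add: lam_def field_simps)
  have c2: "lam * U * 4 \<le> \<gamma>" using c1 unfolding GammaS_def \<gamma>_def by simp
  have "4 * lam * U \<le> 2 / psi 0" using c1 unfolding GammaS_def by simp
  then have c3: "lam * U * psi 0 * 2 \<le> 1" using psi0 by (simp add: field_simps)
  define rE where "rE j p = recE dx (\<lambda>i. rho i p) j" for j p
  define rW where "rW j p = recW dx (\<lambda>i. rho i p) j" for j p
  define sE where "sE j = recE dx (total P rho) j" for j
  define sW where "sW j = recW dx (total P rho) j" for j
  have tnn: "total P rho j \<ge> 0" if "j \<le> M+1" for j
    unfolding total_def using nonneg that by (intro sum_nonneg) auto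
  have rfacts: "0 \<le> rE j p \<and> 0 \<le> rW j p \<and> rE j p + rW j p = 2 * rho j p" if "j \<le> M" "p < P" for j p
  proof -
    have "rho (j-1) p \<ge> 0" "rho j p \<ge> 0" "rho (j+1) p \<ge> 0" using nonneg that by auto
    then show ?thesis using rec_between[OF dxp, of "\<lambda>i. rho i p" j] unfolding rE_def rW_def
      by (smt (verit) max.cobounded1 min_def)
  qed
  have sfacts: "0 \<le> sE j \<and> sE j \<le> alpha \<and> 0 \<le> sW j \<and> sW j \<le> alpha \<and> sE j + sW j = 2 * total P rho j" if "j \<le> M" for j
  proof -
    have "total P rho (j-1) \<ge> 0" "total P rho j \<ge> 0" "total P rho (j+1) \<ge> 0"
      "total P rho (j-1) \<le> alpha" "total P rho j \<le> alpha" "total P rho (j+1) \<le> alpha"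
      using tnn bound that by auto
    then show ?thesis using rec_between[OF dxp, of "total P rho" j] unfolding sE_def sW_def
      by (smt (verit) max_def min_def)
  qed
  have fl: "flux psi u P M dx rho j p = rE j p * psi (sW (j+1)) * max (u (dx * real j) p) 0
          + rW (j+1) p * psi (sE j) * min (u (dx * real j) p) 0" if "1 \<le> j" "j < M" for j p
    using that unfolding flux_def rE_def rW_def sE_def sW_def by simp
  have fb: "flux psi u P M dx rho j p \<le> U * psi 0 * rE j p"
    "flux psi u P M dx rho j p \<le> U * psi (sW (j+1)) * rE j p"
    "- flux psi u P M dx rho j p \<le> U * psi 0 * rW (j+1) p"
    "- flux psi u P M dx rho j p \<le> U * psi (sE j) * rW (j+1) p"
    if "1 \<le> j" "j < M" "p < P" for j p
  proof -
    have a: "0 \<le> rE j p" "0 \<le> rW (j+1) p" using rfacts that by auto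
    have b: "0 \<le> psi (sW (j+1))" "psi (sW (j+1)) \<le> psi 0" "0 \<le> psi (sE j)" "psi (sE j) \<le> psi 0"
      using psir sfacts that by auto
    have w: "\<bar>u (dx * real j) p\<bar> \<le> U" using Ub that by auto
    show "flux psi u P M dx rho j p \<le> U * psi 0 * rE j p"
      "flux psi u P M dx rho j p \<le> U * psi (sW (j+1)) * rE j p"
      "- flux psi u P M dx rho j p \<le> U * psi 0 * rW (j+1) p"
      "- flux psi u P M dx rho j p \<le> U * psi (sE j) * rW (j+1) p"
      unfolding fl[OF that(1,2)] using prod_bounds[OF a b(1,3) _ _ w] b by auto
  qed
  show ?thesis
  proof (intro ballI conjI allI impI)
    fix i assume i: "i \<in> {1..M}"
    have f1: "flux psi u P M dx rho i p \<le> U * psi 0 * rE i p" if "p < P" for p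
    proof (cases "i < M")
      case True then show ?thesis using fb(1)[of i p] i that by auto
    next
      case False then have "flux psi u P M dx rho i p = 0" unfolding flux_def by auto
      then show ?thesis using rfacts[of i p] i that U0 psi0 by simp
    qed
    have f2: "- flux psi u P M dx rho (i-1) p \<le> U * psi 0 * rW i p" if "p < P" for p
    proof (cases "1 \<le> i - 1")
      case True then show ?thesis using fb(3)[of "i-1" p] i that by auto
    next
      case False then have "flux psi u P M dx rho (i-1) p = 0" unfolding flux_def by auto
      then show ?thesis using rfacts[of i p] i that U0 psi0 by simp
    qed
    have f3: "- flux psi u P M dx rho i p \<le> U * psi (sE i) * (2 * rho (i+1) p)" if "p < P" for p
    proof (cases "i < M")
      case True
      have "rW (i+1) p \<le> 2 * rho (i+1) p" using rfacts[of "i+1" p] True that by auto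
      moreover have "0 \<le> U * psi (sE i)" using U0 psir sfacts i by auto
      ultimately have "U * psi (sE i) * rW (i+1) p \<le> U * psi (sE i) * (2 * rho (i+1) p)"
        by (intro mult_left_mono) auto
      then show ?thesis using fb(4)[of i p] i that True by auto
    next
      case False then have "flux psi u P M dx rho i p = 0" unfolding flux_def by auto
      moreover have "0 \<le> U * psi (sE i)" using U0 psir sfacts i by auto
      moreover have "0 \<le> rho (i+1) p" using nonneg i that by auto
      ultimately show ?thesis by simp
    qed
    have f4: "flux psi u P M dx rho (i-1) p \<le> U * psi (sW i) * (2 * rho (i-1) p)" if "p < P" for p
    proof (cases "1 \<le> i - 1")
      case True
      have "rE (i-1) p \<le> 2 * rho (i-1) p" using rfacts[of "i-1" p] True i that by (smt (verit) atLeastAtMost_iff diff_le_self le_trans)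
      moreover have "0 \<le> U * psi (sW i)" using U0 psir sfacts i by auto
      ultimately have "U * psi (sW i) * rE (i-1) p \<le> U * psi (sW i) * (2 * rho (i-1) p)"
        by (intro mult_left_mono) auto
      then show ?thesis using fb(2)[of "i-1" p] i that True by (smt (verit) One_nat_def atLeastAtMost_iff diff_less le_add_diff_inverse2 less_le_trans zero_less_one)
    next
      case False then have "flux psi u P M dx rho (i-1) p = 0" unfolding flux_def by auto
      moreover have "0 \<le> U * psi (sW i)" using U0 psir sfacts i by auto
      moreover have "0 \<le> rho (i-1) p" using nonneg i that by auto
      ultimately show ?thesis by simp
    qed
    {
      fix p assume p: "p < P"
      have "flux psi u P M dx rho i p - flux psi u P M dx rho (i-1) p \<le> U * psi 0 * (2 * rho i p)"
      proof -
        have "U * psi 0 * (2 * rho i p) = U * psi 0 * rE i p + U * psi 0 * rW i p"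
          using rfacts[of i p] i p by (metis atLeastAtMost_iff distrib_left)
        then show ?thesis using f1[OF p] f2[OF p] by linarith
      qed
      then have "lam * (flux psi u P M dx rho i p - flux psi u P M dx rho (i-1) p) \<le> lam * (U * psi 0 * (2 * rho i p))"
        using lam0 by (intro mult_left_mono) auto
      also have "\<dots> = (lam * U * psi 0 * 2) * rho i p" by simp
      also have "\<dots> \<le> 1 * rho i p" using c3 nonneg i p by (intro mult_right_mono) auto
      finally show "0 \<le> step psi u P M dx dt rho i p"
        unfolding step_def lam_def[symmetric] by simp
    }
    define psE where "psE = psi (sE i)"
    define psW where "psW = psi (sW i)"
    have pp: "0 \<le> psE" "0 \<le> psW" using psir sfacts i unfolding psE_def psW_def by auto
    have "(\<Sum>p<P. flux psi u P M dx rho (i-1) p - flux psi u P M dx rho i p)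
        \<le> (\<Sum>p<P. U * psW * 2 * rho (i-1) p + U * psE * 2 * rho (i+1) p)"
    proof (intro sum_mono)
      fix p assume "p \<in> {..<P}"
      then have p: "p < P" by simp
      show "flux psi u P M dx rho (i-1) p - flux psi u P M dx rho i p
          \<le> U * psW * 2 * rho (i-1) p + U * psE * 2 * rho (i+1) p"
        using f3[OF p] f4[OF p] unfolding psE_def psW_def by (simp add: mult_ac)
    qed
    also have "\<dots> = U * psW * 2 * total P rho (i-1) + U * psE * 2 * total P rho (i+1)"
      unfolding total_def by (simp add: sum.distrib sum_distrib_left)
    also have "\<dots> \<le> U * psW * 2 * alpha + U * psE * 2 * alpha"
      using bound i U0 pp by (intro add_mono mult_left_mono) auto
    finally have sumb: "(\<Sum>p<P. flux psi u P M dx rho (i-1) p - flux psi u P M dx rho i p)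
        \<le> U * 2 * alpha * (psW + psE)" by (simp add: algebra_simps)
    have "total P (step psi u P M dx dt rho) i
        = total P rho i + lam * (\<Sum>p<P. flux psi u P M dx rho (i-1) p - flux psi u P M dx rho i p)"
      unfolding total_def step_def lam_def[symmetric]
      by (simp add: sum_subtractf sum_distrib_left sum.distrib algebra_simps)
    also have "\<dots> \<le> total P rho i + lam * (U * 2 * alpha * (psW + psE))"
      using sumb lam0 by (simp add: mult_left_mono)
    also have "lam * (U * 2 * alpha * (psW + psE)) = (lam * U * 4) * (alpha * (psW + psE) / 2)"
      by simp
    also have "\<dots> \<le> \<gamma> * (alpha * (psW + psE) / 2)"
      using c2 pp al by (intro mult_right_mono) auto
    also have "\<dots> = (\<gamma> * psW * alpha + \<gamma> * psE * alpha) / 2" by (simp add: algebra_simps)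
    also have "\<dots> \<le> ((alpha - sW i) + (alpha - sE i)) / 2"
      using gb[of "sW i"] gb[of "sE i"] sfacts[of i] i unfolding psE_def psW_def by auto
    finally show "total P (step psi u P M dx dt rho) i \<le> alpha"
      using sfacts[of i] i by (simp add: field_simps)
  qed
qed

end
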